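(* Let $X$ be a topological space in which every open set is a union of countably many clopen sets. The following are equivalent: (1) $X$ is a $\overline{\mathrm{QN}}$ space; (2) $X$ is a QN space; (3) every sequence of Borel real-valued functions on $X$ converging pointwise to $0$ converges to $0$ quasi-normally; (4) every sequence of Borel real-valued functions on $X$ converging pointwise to a function $f$ converges quasi-normally to $f$.
   Context: Functions $f_n:X\to\mathbb{R}$ converge quasi-normally to $f$ if there are positive reals $\epsilon_n\to0$ such that for each $x\in X$, $|f_n(x)-f(x)|<\epsilon_n$ for all but finitely many $n$. $X$ is a QN space if every sequence of continuous real-valued functions on $X$ converging pointwise to $0$ converges to $0$ quasi-normally. $X$ is a $\overline{\mathrm{QN}}$ space if whenever a sequence of continuous real-valued functions on $X$ converges pointwise to a function $f:X\to\mathbb{R}$ (not assumed continuous), it converges to $f$ quasi-normally. *)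

theory Defs
  imports "HOL-Analysis.Analysis"
begin

definition qn_converges :: "'a topology \<Rightarrow> (nat \<Rightarrow> 'a \<Rightarrow> real) \<Rightarrow> ('a \<Rightarrow> real) \<Rightarrow> bool" where
  "qn_converges X f g \<longleftrightarrow>
     (\<exists>\<epsilon>::nat \<Rightarrow> real. (\<forall>n. \<epsilon> n > 0) \<and> \<epsilon> \<longlonglongrightarrow> 0 \<and>
        (\<forall>x\<in>topspace X. eventually (\<lambda>n. \<bar>f n x - g x\<bar> < \<epsilon> n) sequentially))"

definition pointwise_converges :: "'a topology \<Rightarrow> (nat \<Rightarrow> 'a \<Rightarrow> real) \<Rightarrow> ('a \<Rightarrow> real) \<Rightarrow> bool" where
  "pointwise_converges X f g \<longleftrightarrow> (\<forall>x\<in>topspace X. (\<lambda>n. f n x) \<longlonglongrightarrow> g x)"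

definition QN_space :: "'a topology \<Rightarrow> bool" where
  "QN_space X \<longleftrightarrow> (\<forall>f. (\<forall>n. continuous_map X euclideanreal (f n)) \<longrightarrow>
      pointwise_converges X f (\<lambda>x. 0) \<longrightarrow> qn_converges X f (\<lambda>x. 0))"

definition QN_bar_space :: "'a topology \<Rightarrow> bool" where
  "QN_bar_space X \<longleftrightarrow> (\<forall>f g. (\<forall>n. continuous_map X euclideanreal (f n)) \<longrightarrow>
      pointwise_converges X f g \<longrightarrow> qn_converges X f g)"

definition borel_of :: "'a topology \<Rightarrow> 'a measure" where
  "borel_of X = sigma (topspace X) {U. openin X U}"

definition borel_fun :: "'a topology \<Rightarrow> ('a \<Rightarrow> real) \<Rightarrow> bool" where
  "borel_fun X h \<longleftrightarrow> h \<in> borel_measurable (borel_of X)"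

end

theory Submission
  imports Defs
begin


definition HYP :: "'a topology \<Rightarrow> bool" where
  "HYP X \<longleftrightarrow> (\<forall>U. openin X U \<longrightarrow>
     (\<exists>\<C>. countable \<C> \<and> (\<forall>C\<in>\<C>. openin X C \<and> closedin X C) \<and> \<Union>\<C> = U))"

lemma decomp:
  assumes "HYP X" "openin X U"
  shows "\<exists>L::nat \<Rightarrow> 'a set. (\<forall>j. openin X (L j) \<and> closedin X (L j)) \<and> disjoint_family L \<and> (\<Union>j. L j) = U"
proof -
  obtain \<C> where C: "countable \<C>" "\<forall>C\<in>\<C>. openin X C \<and> closedin X C" "\<Union>\<C> = U"
    using assms unfolding HYP_def by blast
  show ?thesis
  proof (cases "\<C> = {}")
    case True
    then show ?thesis using C by (intro exI[of _ "\<lambda>_. {}"]) (auto simp: disjoint_family_on_def)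
  next
    case False
    define c where "c = from_nat_into \<C>"
    have rc: "range c = \<C>" using False C(1) by (simp add: c_def)
    have cc: "openin X (c j) \<and> closedin X (c j)" for j using rc C(2) by auto
    have "openin X (disjointed c j) \<and> closedin X (disjointed c j)" for j
    proof -
      have f: "finite (c ` {0..<j})" by simp
      have "closedin X (\<Union>(c ` {0..<j}))" using cc by (intro closedin_Union[OF f]) auto
      moreover have "openin X (\<Union>(c ` {0..<j}))" using cc by (intro openin_Union) auto
      ultimately show ?thesis using cc[of j] unfolding disjointed_def by auto
    qed
    moreover have "(\<Union>j. disjointed c j) = U"
      using UN_disjointed_eq[of c] rc C(3) by simp
    ultimately show ?thesis using disjoint_family_disjointed[of c] by blast
  qed
qed

lemma clopen_ind_cont:
  assumes "openin X S" "closedin X S"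
  shows "continuous_map X euclideanreal (\<lambda>x. c * indicator S x)"
proof -
  have "openin X {x \<in> topspace X. c * indicator S x \<in> V}" for V :: "real set"
  proof -
    have S: "S \<subseteq> topspace X" using assms openin_subset by blast
    have "{x \<in> topspace X. c * indicator S x \<in> V} =
       (if c \<in> V then S else {}) \<union> (if 0 \<in> V then topspace X - S else {})"
      using S by (auto simp: indicator_def)
    moreover have "openin X (topspace X - S)" using assms by auto
    ultimately show ?thesis using assms by auto
  qed
  then show ?thesis by (auto simp: continuous_map_def)
qed

lemma ev_fin: "eventually P sequentially \<longleftrightarrow> finite {n. \<not> P n}"
  by (simp add: cofinite_eq_sequentially[symmetric] eventually_cofinite)

lemma S1C:
  assumes hyp: "HYP X" and qn: "QN_space X"
    and Acl: "\<And>k m. closedin X (A k m)"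
    and Acov: "\<And>k x. x \<in> topspace X \<Longrightarrow> eventually (\<lambda>m. x \<in> A k m) sequentially"
  shows "\<exists>mm. \<forall>x\<in>topspace X. eventually (\<lambda>k. x \<in> A k (mm k)) sequentially"
proof -
  have "\<forall>km. \<exists>L::nat\<Rightarrow>'a set. (\<forall>j. openin X (L j) \<and> closedin X (L j)) \<and> disjoint_family L \<and> (\<Union>j. L j) = topspace X - A (fst km) (snd km)"
  proof
    fix km
    have "openin X (topspace X - A (fst km) (snd km))" using Acl closedin_def by blast
    then show "\<exists>L::nat\<Rightarrow>'a set. (\<forall>j. openin X (L j) \<and> closedin X (L j)) \<and> disjoint_family L \<and> (\<Union>j. L j) = topspace X - A (fst km) (snd km)"
      using decomp[OF hyp, of "topspace X - A (fst km) (snd km)"] by simp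
  qed
  from choice[OF this] obtain Lp :: "nat \<times> nat \<Rightarrow> nat \<Rightarrow> 'a set" where Lp: "\<forall>km. (\<forall>j. openin X (Lp km j) \<and> closedin X (Lp km j)) \<and> disjoint_family (Lp km) \<and> (\<Union>j. Lp km j) = topspace X - A (fst km) (snd km)"
    ..
  define L :: "nat \<Rightarrow> nat \<Rightarrow> nat \<Rightarrow> 'a set" where "L k m = Lp (k,m)" for k m
  have L0: "(\<forall>j. openin X (L k m j) \<and> closedin X (L k m j)) \<and> disjoint_family (L k m) \<and> (\<Union>j. L k m j) = topspace X - A k m" for k m
    using spec[OF Lp, of "(k,m)"] unfolding L_def by simp
  then have L: "\<And>k m j. openin X (L k m j)" "\<And>k m j. closedin X (L k m j)"
     "\<And>k m. disjoint_family (L k m)" "\<And>k m. (\<Union>j. L k m j) = topspace X - A k m"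
    using L0 by simp_all
  define idx where "idx k m j = prod_encode (k, prod_encode (m, j))" for k m j
  define kk where "kk n = fst (prod_decode n)" for n
  define mj where "mj n = prod_decode (snd (prod_decode n))" for n
  define T where "T k m j x = (1/2::real)^k * indicator (L k m j) x" for k m j x
  define f where "f n x = T (kk n) (fst (mj n)) (snd (mj n)) x" for n x
  have f_idx: "f (idx k m j) = T k m j" for k m j
    by (simp add: f_def idx_def kk_def mj_def fun_eq_iff)
  have idx_f: "idx (kk n) (fst (mj n)) (snd (mj n)) = n" for n
    by (simp add: idx_def kk_def mj_def)
  have cont: "continuous_map X euclideanreal (f n)" for n
  proof -
    have "f n = (\<lambda>x. (1/2)^(kk n) * indicator (L (kk n) (fst (mj n)) (snd (mj n))) x)"
      by (simp add: fun_eq_iff f_def T_def)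
    then show ?thesis using clopen_ind_cont[OF L(1) L(2)] by simp
  qed
  have conv: "pointwise_converges X f (\<lambda>x. 0)"
    unfolding pointwise_converges_def
  proof
    fix x assume x: "x \<in> topspace X"
    show "(\<lambda>n. f n x) \<longlonglongrightarrow> 0"
      unfolding tendsto_iff
    proof (intro allI impI)
      fix e :: real assume e: "e > 0"
      obtain K where K: "(1/2::real)^K < e" using real_arch_pow_inv[OF e, of "1/2"] by auto
      define S where "S = {(k,m,j). k \<le> K \<and> x \<notin> A k m \<and> x \<in> L k m j}"
      have fin1: "finite {m. x \<notin> A k m}" for k using Acov[OF x, of k] by (simp add: ev_fin)
      have fin2: "finite {j. x \<in> L k m j}" for k m
      proof (cases "\<exists>j. x \<in> L k m j")
        case True
        then obtain j0 where j0: "x \<in> L k m j0" by blast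
        have "{j. x \<in> L k m j} \<subseteq> {j0}"
          using j0 L(3)[of k m] by (auto simp: disjoint_family_on_def)
        then show ?thesis using finite_subset by blast
      qed simp
      have "S \<subseteq> Sigma {..K} (\<lambda>k. Sigma {m. x \<notin> A k m} (\<lambda>m. {j. x \<in> L k m j}))"
        unfolding S_def by blast
      moreover have "finite (Sigma {..K} (\<lambda>k. Sigma {m. x \<notin> A k m} (\<lambda>m. {j. x \<in> L k m j})))"
        using fin1 fin2 by (intro finite_SigmaI) auto
      ultimately have finS: "finite S" using finite_subset by blast
      have "{n. \<not> dist (f n x) 0 < e} \<subseteq> (\<lambda>(k,m,j). idx k m j) ` S"
      proof
        fix n assume n: "n \<in> {n. \<not> dist (f n x) 0 < e}"
        define k where "k = kk n"
        define m where "m = fst (mj n)"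
        define j where "j = snd (mj n)"
        have fn: "f n x = T k m j x" unfolding f_def k_def m_def j_def by simp
        have xL: "x \<in> L k m j"
        proof (rule ccontr)
          assume "x \<notin> L k m j"
          then have "f n x = 0" using fn T_def by simp
          then show False using n e by simp
        qed
        then have fv: "f n x = (1/2)^k" using fn T_def by simp
        have "x \<notin> A k m" using xL L(4)[of k m] by blast
        moreover have "k \<le> K"
        proof (rule ccontr)
          assume "\<not> k \<le> K"
          then have "(1/2::real)^k < (1/2)^K" by (intro power_strict_decreasing) auto
          then have "(1/2::real)^k < e" using K by linarith
          then show False using n fv by simp
        qed
        ultimately have "(k,m,j) \<in> S" using xL S_def by simp
        moreover have "n = idx k m j" using idx_f k_def m_def j_def by simp
        ultimately show "n \<in> (\<lambda>(k,m,j). idx k m j) ` S" by (intro rev_image_eqI[of "(k,m,j)"]) simp_all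
      qed
      then have "finite {n. \<not> dist (f n x) 0 < e}" using finS finite_subset by blast
      then show "eventually (\<lambda>n. dist (f n x) 0 < e) sequentially" by (simp add: ev_fin)
    qed
  qed
  obtain \<delta> where \<delta>: "\<forall>n. \<delta> n > 0" "\<delta> \<longlonglongrightarrow> 0"
      "\<forall>x\<in>topspace X. \<forall>\<^sub>F n in sequentially. \<bar>f n x - 0\<bar> < \<delta> n"
    using qn cont conv unfolding QN_space_def qn_converges_def by blast
  have "\<forall>k. \<exists>N. \<forall>n\<ge>N. \<delta> n < (1/2)^k"
  proof
    fix k
    have "eventually (\<lambda>n. \<delta> n < (1/2)^k) sequentially"
      using order_tendstoD(2)[OF \<delta>(2), of "(1/2)^k"] by simp
    then show "\<exists>N. \<forall>n\<ge>N. \<delta> n < (1/2)^k" by (simp add: eventually_sequentially)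
  qed
  then obtain mm where mm: "\<And>k n. n \<ge> mm k \<Longrightarrow> \<delta> n < (1/2)^k" by metis
  show ?thesis
  proof (intro exI ballI)
    fix x assume x: "x \<in> topspace X"
    have fin: "finite {n. \<not> \<bar>f n x - 0\<bar> < \<delta> n}" using \<delta>(3) x by (simp add: ev_fin)
    have "{k. x \<notin> A k (mm k)} \<subseteq> kk ` {n. \<not> \<bar>f n x - 0\<bar> < \<delta> n}"
    proof
      fix k assume "k \<in> {k. x \<notin> A k (mm k)}"
      then have "x \<in> (\<Union>j. L k (mm k) j)" using L(4) x by auto
      then obtain j where j: "x \<in> L k (mm k) j" by auto
      have "mm k \<le> prod_encode (mm k, j)" by (rule le_prod_encode_1)
      also have "\<dots> \<le> idx k (mm k) j" unfolding idx_def by (rule le_prod_encode_2)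
      finally have "\<delta> (idx k (mm k) j) < (1/2)^k" by (rule mm)
      moreover have "f (idx k (mm k) j) x = (1/2)^k" using f_idx j T_def by simp
      ultimately have "idx k (mm k) j \<in> {n. \<not> \<bar>f n x - 0\<bar> < \<delta> n}" by simp
      moreover have "kk (idx k (mm k) j) = k" by (simp add: kk_def idx_def)
      ultimately show "k \<in> kk ` {n. \<not> \<bar>f n x - 0\<bar> < \<delta> n}" by force
    qed
    then have "finite {k. x \<notin> A k (mm k)}" using fin finite_subset by blast
    then show "eventually (\<lambda>k. x \<in> A k (mm k)) sequentially" by (simp add: ev_fin)
  qed
qed



lemma lim_le:
  fixes u :: "nat \<Rightarrow> real"
  assumes "u \<longlonglongrightarrow> L" "\<forall>q\<ge>m. \<bar>a - u q\<bar> \<le> c"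
  shows "\<bar>a - L\<bar> \<le> c"
proof -
  have "(\<lambda>q. \<bar>a - u q\<bar>) \<longlonglongrightarrow> \<bar>a - L\<bar>"
    by (intro tendsto_rabs tendsto_diff tendsto_const assms(1))
  then show ?thesis using assms(2) by (intro LIMSEQ_le_const2) auto
qed

lemma cauchy_ev:
  fixes u :: "nat \<Rightarrow> real"
  assumes "u \<longlonglongrightarrow> L" "e > 0"
  shows "eventually (\<lambda>m. \<forall>p\<ge>m. \<forall>q\<ge>m. \<bar>u p - u q\<bar> \<le> e) sequentially"
proof -
  obtain M where M: "\<forall>p\<ge>M. \<forall>q\<ge>M. norm (u p - u q) < e"
    using CauchyD[OF LIMSEQ_imp_Cauchy[OF assms(1)] assms(2)] by blast
  show ?thesis unfolding eventually_sequentially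
  proof (rule exI[of _ M], intro allI impI)
    fix n p q assume "M \<le> n" "n \<le> p" "n \<le> q"
    then have "norm (u p - u q) < e" using M by auto
    then show "\<bar>u p - u q\<bar> \<le> e" by simp
  qed
qed

lemma closed_cs:
  fixes f :: "nat \<Rightarrow> 'a \<Rightarrow> real"
  assumes "\<And>n. continuous_map X euclideanreal (f n)"
  shows "closedin X {x\<in>topspace X. \<forall>p\<ge>m. \<forall>q\<ge>m. \<bar>f p x - f q x\<bar> \<le> c}"
proof -
  have eq: "{x\<in>topspace X. \<forall>p\<ge>m. \<forall>q\<ge>m. \<bar>f p x - f q x\<bar> \<le> c} =
     topspace X \<inter> \<Inter> ((\<lambda>(p,q). {x\<in>topspace X. \<bar>f p x - f q x\<bar> \<in> {..c}}) ` ({m..} \<times> {m..}))"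
    by auto
  have "closedin X {x\<in>topspace X. \<bar>f p x - f q x\<bar> \<in> {..c}}" for p q
    by (rule closedin_continuous_map_preimage[where Y=euclideanreal])
       (auto intro!: continuous_map_real_abs continuous_map_diff assms simp: closed_closedin[symmetric])
  moreover have "(m,m) \<in> {m..} \<times> {m..}" by simp
  ultimately show ?thesis unfolding eq by (intro closedin_Int closedin_topspace closedin_Inter) auto
qed

lemma sel_qn:
  assumes "\<And>x. x \<in> topspace X \<Longrightarrow> eventually (\<lambda>k. \<forall>n\<ge>mm k. \<bar>f n x - g x\<bar> \<le> (1/2::real)^k) sequentially"
  shows "qn_converges X f g"
proof -
  define M where "M k = k + (\<Sum>i\<le>k. mm i)" for k
  have Mmono: "mono M" unfolding mono_iff_le_Suc M_def by simp
  have Mge: "mm k \<le> M k" "k \<le> M k" for k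
    unfolding M_def by (auto intro!: member_le_sum trans_le_add2)
  define K where "K n = Max (insert 0 {k. k \<le> n \<and> M k \<le> n})" for n
  have Kfin: "finite (insert 0 {k. k \<le> n \<and> M k \<le> n})" for n
    by (rule finite_subset[of _ "{..n}"]) auto
  have K1: "k \<le> K n" if "M k \<le> n" for k n
    unfolding K_def using that Mge(2)[of k] Kfin[of n] by (intro Max_ge) auto
  have K2: "K n = 0 \<or> M (K n) \<le> n" for n
    using Max_in[OF Kfin[of n]] unfolding K_def by auto
  define \<epsilon> where "\<epsilon> n = 2 * (1/2::real)^(K n)" for n
  have epos: "\<forall>n. \<epsilon> n > 0" unfolding \<epsilon>_def by simp
  have "filterlim K at_top sequentially"
    unfolding filterlim_at_top eventually_sequentially using K1 by blast
  then have "(\<lambda>n. (1/2::real)^(K n)) \<longlonglongrightarrow> 0"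
    using filterlim_compose[OF LIMSEQ_realpow_zero[of "1/2::real"]] by auto
  then have elim: "\<epsilon> \<longlonglongrightarrow> 0" unfolding \<epsilon>_def using tendsto_mult_right_zero by blast
  have "\<forall>x\<in>topspace X. \<forall>\<^sub>F n in sequentially. \<bar>f n x - g x\<bar> < \<epsilon> n"
  proof
    fix x assume x: "x \<in> topspace X"
    obtain k0 where k0: "\<And>k. k \<ge> k0 \<Longrightarrow> \<forall>n\<ge>mm k. \<bar>f n x - g x\<bar> \<le> (1/2::real)^k"
      using assms[OF x] unfolding eventually_sequentially by blast
    show "\<forall>\<^sub>F n in sequentially. \<bar>f n x - g x\<bar> < \<epsilon> n"
      unfolding eventually_sequentially
    proof (intro exI allI impI)
      fix n assume n: "M k0 \<le> n"
      have kk: "k0 \<le> K n" using K1[OF n] .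
      have "M (K n) \<le> n"
      proof (cases "K n = 0")
        case True
        then have "k0 = 0" using kk by simp
        then show ?thesis using True n by simp
      qed (use K2[of n] in auto)
      then have "mm (K n) \<le> n" using Mge(1)[of "K n"] by linarith
      then have "\<bar>f n x - g x\<bar> \<le> (1/2)^(K n)" using k0[OF kk] by blast
      also have "\<dots> < \<epsilon> n" unfolding \<epsilon>_def by simp
      finally show "\<bar>f n x - g x\<bar> < \<epsilon> n" .
    qed
  qed
  then show ?thesis unfolding qn_converges_def using epos elim by blast
qed

lemma qn_bar:
  assumes hyp: "HYP X" and qn: "QN_space X"
  shows "QN_bar_space X"
  unfolding QN_bar_space_def
proof (intro allI impI)
  fix f :: "nat \<Rightarrow> 'a \<Rightarrow> real" and g
  assume cont: "\<forall>n. continuous_map X euclideanreal (f n)" and pw: "pointwise_converges X f g"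
  define A where "A k m = {x\<in>topspace X. \<forall>p\<ge>m. \<forall>q\<ge>m. \<bar>f p x - f q x\<bar> \<le> (1/2::real)^k}" for k m
  have Acl: "closedin X (A k m)" for k m unfolding A_def using cont by (intro closed_cs) auto
  have Acov: "eventually (\<lambda>m. x \<in> A k m) sequentially" if x: "x \<in> topspace X" for k x
  proof -
    have lim: "(\<lambda>n. f n x) \<longlonglongrightarrow> g x" using pw x unfolding pointwise_converges_def by blast
    have "eventually (\<lambda>m. \<forall>p\<ge>m. \<forall>q\<ge>m. \<bar>f p x - f q x\<bar> \<le> (1/2::real)^k) sequentially"
      by (rule cauchy_ev[OF lim]) simp
    then show ?thesis
      by eventually_elim (use x in \<open>auto simp: A_def\<close>)
  qed
  have "\<exists>mm. \<forall>x\<in>topspace X. eventually (\<lambda>k. x \<in> A k (mm k)) sequentially"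
    by (rule S1C[OF hyp qn]) (use Acl Acov in auto)
  then obtain mm where mm: "\<forall>x\<in>topspace X. eventually (\<lambda>k. x \<in> A k (mm k)) sequentially"
    by blast
  show "qn_converges X f g"
  proof (rule sel_qn)
    fix x assume x: "x \<in> topspace X"
    have lim: "(\<lambda>n. f n x) \<longlonglongrightarrow> g x" using pw x unfolding pointwise_converges_def by blast
    from mm[rule_format, OF x] show "eventually (\<lambda>k. \<forall>n\<ge>mm k. \<bar>f n x - g x\<bar> \<le> (1/2::real)^k) sequentially"
    proof eventually_elim
      case (elim k)
      show ?case
      proof (intro allI impI)
        fix n assume "n \<ge> mm k"
        then have "\<forall>q\<ge>mm k. \<bar>f n x - f q x\<bar> \<le> (1/2)^k" using elim by (auto simp: A_def)
        then show "\<bar>f n x - g x\<bar> \<le> (1/2)^k" by (rule lim_le[OF lim])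
      qed
    qed
  qed
qed



definition B1 :: "'a topology \<Rightarrow> ('a \<Rightarrow> real) \<Rightarrow> bool" where
  "B1 X f \<longleftrightarrow> (\<exists>g::nat \<Rightarrow> 'a \<Rightarrow> real. (\<forall>j. continuous_map X euclideanreal (g j)) \<and>
      (\<forall>x\<in>topspace X. (\<lambda>j. g j x) \<longlonglongrightarrow> f x))"

lemma B1_cont: "continuous_map X euclideanreal f \<Longrightarrow> B1 X f"
  unfolding B1_def by (rule exI[of _ "\<lambda>j. f"]) auto

lemma B1_cong: "B1 X f \<Longrightarrow> (\<And>x. x \<in> topspace X \<Longrightarrow> f x = f' x) \<Longrightarrow> B1 X f'"
  unfolding B1_def by metis

lemma B1_add: "B1 X f \<Longrightarrow> B1 X h \<Longrightarrow> B1 X (\<lambda>x. f x + h x)"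
  unfolding B1_def
proof (elim exE conjE)
  fix g1 g2 :: "nat \<Rightarrow> 'a \<Rightarrow> real"
  assume "\<forall>j. continuous_map X euclideanreal (g1 j)" "\<forall>x\<in>topspace X. (\<lambda>j. g1 j x) \<longlonglongrightarrow> f x"
    "\<forall>j. continuous_map X euclideanreal (g2 j)" "\<forall>x\<in>topspace X. (\<lambda>j. g2 j x) \<longlonglongrightarrow> h x"
  then show "\<exists>g::nat \<Rightarrow> 'a \<Rightarrow> real. (\<forall>j. continuous_map X euclideanreal (g j)) \<and>
      (\<forall>x\<in>topspace X. (\<lambda>j. g j x) \<longlonglongrightarrow> f x + h x)"
    by (intro exI[of _ "\<lambda>j x. g1 j x + g2 j x"]) (auto intro: continuous_map_add tendsto_add)
qed

lemma B1_diff: "B1 X f \<Longrightarrow> B1 X h \<Longrightarrow> B1 X (\<lambda>x. f x - h x)"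
  unfolding B1_def
proof (elim exE conjE)
  fix g1 g2 :: "nat \<Rightarrow> 'a \<Rightarrow> real"
  assume "\<forall>j. continuous_map X euclideanreal (g1 j)" "\<forall>x\<in>topspace X. (\<lambda>j. g1 j x) \<longlonglongrightarrow> f x"
    "\<forall>j. continuous_map X euclideanreal (g2 j)" "\<forall>x\<in>topspace X. (\<lambda>j. g2 j x) \<longlonglongrightarrow> h x"
  then show "\<exists>g::nat \<Rightarrow> 'a \<Rightarrow> real. (\<forall>j. continuous_map X euclideanreal (g j)) \<and>
      (\<forall>x\<in>topspace X. (\<lambda>j. g j x) \<longlonglongrightarrow> f x - h x)"
    by (intro exI[of _ "\<lambda>j x. g1 j x - g2 j x"]) (auto intro: continuous_map_diff tendsto_diff)
qed

lemma B1_max: "B1 X f \<Longrightarrow> B1 X h \<Longrightarrow> B1 X (\<lambda>x. max (f x) (h x))"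
  unfolding B1_def
proof (elim exE conjE)
  fix g1 g2 :: "nat \<Rightarrow> 'a \<Rightarrow> real"
  assume "\<forall>j. continuous_map X euclideanreal (g1 j)" "\<forall>x\<in>topspace X. (\<lambda>j. g1 j x) \<longlonglongrightarrow> f x"
    "\<forall>j. continuous_map X euclideanreal (g2 j)" "\<forall>x\<in>topspace X. (\<lambda>j. g2 j x) \<longlonglongrightarrow> h x"
  then show "\<exists>g::nat \<Rightarrow> 'a \<Rightarrow> real. (\<forall>j. continuous_map X euclideanreal (g j)) \<and>
      (\<forall>x\<in>topspace X. (\<lambda>j. g j x) \<longlonglongrightarrow> max (f x) (h x))"
    by (intro exI[of _ "\<lambda>j x. max (g1 j x) (g2 j x)"]) (auto intro: continuous_map_real_max tendsto_max)
qed

lemma B1_cmult: "B1 X f \<Longrightarrow> B1 X (\<lambda>x. c * f x)"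
  unfolding B1_def
proof (elim exE conjE)
  fix g1 :: "nat \<Rightarrow> 'a \<Rightarrow> real"
  assume "\<forall>j. continuous_map X euclideanreal (g1 j)" "\<forall>x\<in>topspace X. (\<lambda>j. g1 j x) \<longlonglongrightarrow> f x"
  then show "\<exists>g::nat \<Rightarrow> 'a \<Rightarrow> real. (\<forall>j. continuous_map X euclideanreal (g j)) \<and>
      (\<forall>x\<in>topspace X. (\<lambda>j. g j x) \<longlonglongrightarrow> c * f x)"
    by (intro exI[of _ "\<lambda>j x. c * g1 j x"]) (auto intro: continuous_map_real_mult_left tendsto_mult_left)
qed

lemma B1_sum: "finite S \<Longrightarrow> (\<And>y. y \<in> S \<Longrightarrow> B1 X (F y)) \<Longrightarrow> B1 X (\<lambda>x. \<Sum>y\<in>S. F y x)"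
proof (induction S rule: finite_induct)
  case empty
  then show ?case by (simp add: B1_cont)
next
  case (insert a S)
  then show ?case by (simp add: B1_add)
qed

lemma B1_lim:
  assumes hyp: "HYP X" and qn: "QN_space X"
    and FB: "\<And>n. B1 X (F n)"
    and lim: "\<And>x. x \<in> topspace X \<Longrightarrow> (\<lambda>n. F n x) \<longlonglongrightarrow> h x"
  shows "B1 X h \<and> qn_converges X F h"
proof -
  have "\<forall>n. \<exists>g::nat \<Rightarrow> 'a \<Rightarrow> real. (\<forall>j. continuous_map X euclideanreal (g j)) \<and>
      (\<forall>x\<in>topspace X. (\<lambda>j. g j x) \<longlonglongrightarrow> F n x)"
    using FB unfolding B1_def by blast
  from choice[OF this] obtain g :: "nat \<Rightarrow> nat \<Rightarrow> 'a \<Rightarrow> real" where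
    g: "\<forall>n. (\<forall>j. continuous_map X euclideanreal (g n j)) \<and> (\<forall>x\<in>topspace X. (\<lambda>j. g n j x) \<longlonglongrightarrow> F n x)"
    ..
  have gc: "continuous_map X euclideanreal (g n j)" for n j using g by blast
  have gl: "x \<in> topspace X \<Longrightarrow> (\<lambda>j. g n j x) \<longlonglongrightarrow> F n x" for n x using g by blast
  define A where "A n m = {x\<in>topspace X. \<forall>p\<ge>m. \<forall>q\<ge>m. \<bar>g n p x - g n q x\<bar> \<le> (1/2::real)^n}" for n m
  have Acl: "closedin X (A n m)" for n m unfolding A_def using gc by (intro closed_cs) auto
  have Acov: "eventually (\<lambda>m. x \<in> A n m) sequentially" if x: "x \<in> topspace X" for n x
  proof -
    have "eventually (\<lambda>m. \<forall>p\<ge>m. \<forall>q\<ge>m. \<bar>g n p x - g n q x\<bar> \<le> (1/2::real)^n) sequentially"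
      by (rule cauchy_ev[OF gl[OF x]]) simp
    then show ?thesis
      by eventually_elim (use x in \<open>auto simp: A_def\<close>)
  qed
  have "\<exists>mm. \<forall>x\<in>topspace X. eventually (\<lambda>n. x \<in> A n (mm n)) sequentially"
    by (rule S1C[OF hyp qn]) (use Acl Acov in auto)
  then obtain mm where mm: "\<forall>x\<in>topspace X. eventually (\<lambda>n. x \<in> A n (mm n)) sequentially"
    by blast
  define G where "G n = g n (mm n)" for n
  have Gc: "\<forall>n. continuous_map X euclideanreal (G n)" unfolding G_def using gc by blast
  have GF: "eventually (\<lambda>n. \<bar>G n x - F n x\<bar> \<le> (1/2::real)^n) sequentially" if x: "x \<in> topspace X" for x
    using mm[rule_format, OF x]
  proof eventually_elim
    case (elim n)
    then have "\<forall>q\<ge>mm n. \<bar>G n x - g n q x\<bar> \<le> (1/2)^n" by (auto simp: A_def G_def)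
    then show ?case by (rule lim_le[OF gl[OF x]])
  qed
  have Gl: "(\<lambda>n. G n x) \<longlonglongrightarrow> h x" if x: "x \<in> topspace X" for x
  proof -
    have "(\<lambda>n. G n x - F n x) \<longlonglongrightarrow> 0"
      by (rule Lim_null_comparison[OF _ LIMSEQ_realpow_zero[of "1/2::real"]]) (use GF[OF x] in auto)
    from tendsto_add[OF lim[OF x] this] show ?thesis by simp
  qed
  have B: "B1 X h" unfolding B1_def using Gc Gl by blast
  have "qn_converges X G h"
    using qn_bar[OF hyp qn] Gc Gl unfolding QN_bar_space_def pointwise_converges_def by blast
  then obtain \<epsilon> where e: "\<forall>n. \<epsilon> n > 0" "\<epsilon> \<longlonglongrightarrow> 0"
      "\<forall>x\<in>topspace X. \<forall>\<^sub>F n in sequentially. \<bar>G n x - h x\<bar> < \<epsilon> n"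
    unfolding qn_converges_def by blast
  have "qn_converges X F h"
    unfolding qn_converges_def
  proof (intro exI[of _ "\<lambda>n. \<epsilon> n + (1/2)^n"] conjI allI ballI)
    show "\<epsilon> n + (1/2::real)^n > 0" for n using e(1)[rule_format, of n] by (intro add_pos_pos) auto
    show "(\<lambda>n. \<epsilon> n + (1/2::real)^n) \<longlonglongrightarrow> 0"
      using tendsto_add[OF e(2) LIMSEQ_realpow_zero[of "1/2::real"]] by simp
    fix x assume x: "x \<in> topspace X"
    from e(3)[rule_format, OF x] GF[OF x]
    show "\<forall>\<^sub>F n in sequentially. \<bar>F n x - h x\<bar> < \<epsilon> n + (1/2)^n"
      by eventually_elim linarith
  qed
  with B show ?thesis by blast
qed



lemma sets_borel_of: "sets (borel_of X) = sigma_sets (topspace X) {U. openin X U}"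
  unfolding borel_of_def by (rule sets_measure_of) (blast dest: openin_subset)

lemma space_borel_of: "space (borel_of X) = topspace X"
  unfolding borel_of_def by (rule space_measure_of_conv)

lemma cont_borel:
  assumes "continuous_map X euclideanreal h"
  shows "borel_fun X h"
  unfolding borel_fun_def
proof (rule borel_measurableI)
  fix S :: "real set" assume "open S"
  then have "openin X {x\<in>topspace X. h x \<in> S}"
    by (intro openin_continuous_map_preimage[OF assms]) (simp add: open_openin[symmetric])
  moreover have "h -` S \<inter> space (borel_of X) = {x\<in>topspace X. h x \<in> S}"
    by (auto simp: space_borel_of)
  ultimately show "h -` S \<inter> space (borel_of X) \<in> sets (borel_of X)"
    by (simp add: sets_borel_of)
qed

lemma B1_ind_open:
  assumes hyp: "HYP X" and U: "openin X U"
  shows "B1 X (indicator U)"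
proof -
  obtain L :: "nat \<Rightarrow> 'a set" where L: "\<forall>j. openin X (L j) \<and> closedin X (L j)" "(\<Union>j. L j) = U"
    using decomp[OF hyp U] by blast
  define g :: "nat \<Rightarrow> 'a \<Rightarrow> real" where "g j x = 1 * indicator (\<Union>i<j. L i) x" for j and x :: 'a
  have "continuous_map X euclideanreal (g j)" for j
  proof -
    have "openin X (\<Union>i<j. L i)" using L(1) by (intro openin_Union) auto
    moreover have "closedin X (\<Union>i<j. L i)" using L(1) by (intro closedin_Union) auto
    ultimately show ?thesis unfolding g_def[abs_def] by (rule clopen_ind_cont)
  qed
  moreover have "(\<lambda>j. g j x) \<longlonglongrightarrow> indicator U x" for x
  proof (cases "x \<in> U")
    case True
    then obtain i0 where "x \<in> L i0" using L(2) by blast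
    then have "eventually (\<lambda>j. g j x = indicator U x) sequentially"
      unfolding eventually_sequentially g_def using True
      by (intro exI[of _ "Suc i0"]) (auto simp: indicator_def)
    then show ?thesis by (rule tendsto_eventually)
  next
    case False
    then have "g j x = indicator U x" for j using L(2) by (auto simp: g_def indicator_def)
    then show ?thesis by simp
  qed
  ultimately show ?thesis unfolding B1_def by blast
qed

lemma B1_ind_borel:
  assumes hyp: "HYP X" and qn: "QN_space X" and B: "B \<in> sets (borel_of X)"
  shows "B1 X (indicator B)"
  using B unfolding sets_borel_of
proof (induction rule: sigma_sets.induct)
  case (Basic a)
  then show ?case using B1_ind_open[OF hyp] by simp
next
  case Empty
  then show ?case by (simp add: B1_cont)
next
  case (Compl a)
  have "B1 X (\<lambda>x. 1 - indicator a x)" by (intro B1_diff B1_cont Compl.IH) simp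
  then show ?case by (rule B1_cong) (auto simp: indicator_def)
next
  case (Union A)
  have fin: "B1 X (indicator (\<Union>i\<le>n. A i))" for n
  proof (induction n)
    case 0
    then show ?case using Union.IH[of 0] by simp
  next
    case (Suc n)
    have "B1 X (\<lambda>x. max (indicator (\<Union>i\<le>n. A i) x) (indicator (A (Suc n)) x))"
      by (intro B1_max Suc.IH Union.IH)
    then show ?case by (rule B1_cong) (auto simp: indicator_def atMost_Suc)
  qed
  have lim: "(\<lambda>n. indicator (\<Union>i\<le>n. A i) x) \<longlonglongrightarrow> (indicator (\<Union>i. A i) x :: real)" for x
  proof (cases "x \<in> (\<Union>i. A i)")
    case True
    then obtain i0 where "x \<in> A i0" by blast
    then have "eventually (\<lambda>n. indicator (\<Union>i\<le>n. A i) x = (indicator (\<Union>i. A i) x :: real)) sequentially"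
      unfolding eventually_sequentially using True
      by (intro exI[of _ i0]) (auto simp: indicator_def)
    then show ?thesis by (rule tendsto_eventually)
  next
    case False
    then show ?thesis by (auto simp: indicator_def)
  qed
  have "B1 X (indicator (\<Union>i. A i)) \<and> qn_converges X (\<lambda>n. indicator (\<Union>i\<le>n. A i)) (indicator (\<Union>i. A i))"
    by (rule B1_lim[OF hyp qn]) (rule fin, rule lim)
  then show ?case by (rule conjunct1)
qed

lemma B1_simple:
  assumes hyp: "HYP X" and qn: "QN_space X"
    and s: "simple_function (borel_of X) s" and nn: "\<And>x. s x \<ge> 0"
  shows "B1 X s"
proof -
  have "B1 X (\<lambda>x. \<Sum>y\<in>s ` space (borel_of X). y * indicator (s -` {y} \<inter> space (borel_of X)) x)"
  proof (rule B1_sum)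
    show "finite (s ` space (borel_of X))" using s by (simp add: simple_function_def)
    fix y
    show "B1 X (\<lambda>x. y * indicator (s -` {y} \<inter> space (borel_of X)) x)"
      by (intro B1_cmult B1_ind_borel[OF hyp qn] simple_functionD(2)[OF s])
  qed
  then show ?thesis
  proof (rule B1_cong)
    fix x assume "x \<in> topspace X"
    then have "x \<in> space (borel_of X)" by (simp add: space_borel_of)
    from simple_function_indicator_representation_real[OF s this nn]
    show "(\<Sum>y\<in>s ` space (borel_of X). y * indicator (s -` {y} \<inter> space (borel_of X)) x) = s x"
      by (rule sym)
  qed
qed

lemma B1_borel_nn:
  assumes hyp: "HYP X" and qn: "QN_space X"
    and u: "u \<in> borel_measurable (borel_of X)" and nn: "\<And>x. u x \<ge> 0"
  shows "B1 X u"
proof -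
  obtain f where f: "incseq f" "\<forall>i. simple_function (borel_of X) (f i)"
     "\<forall>x. bdd_above (range (\<lambda>i. f i x))" "\<forall>i x. 0 \<le> f i x" "u = (SUP i. f i)"
    using borel_measurable_implies_simple_function_sequence_real[OF u nn] by blast
  have flim: "(\<lambda>i. f i x) \<longlonglongrightarrow> u x" for x
  proof -
    have "incseq (\<lambda>i. f i x)" using f(1) unfolding incseq_def le_fun_def by blast
    from LIMSEQ_incseq_SUP[OF f(3)[rule_format] this]
    show ?thesis using f(5) by (simp add: image_image)
  qed
  have fB: "B1 X (f i)" for i using B1_simple[OF hyp qn] f(2,4) by blast
  have "B1 X u \<and> qn_converges X f u"
    by (rule B1_lim[OF hyp qn]) (rule fB, rule flim)
  then show ?thesis by (rule conjunct1)
qed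

lemma B1_borel:
  assumes hyp: "HYP X" and qn: "QN_space X" and u: "borel_fun X u"
  shows "B1 X u"
proof -
  have u': "u \<in> borel_measurable (borel_of X)" using u unfolding borel_fun_def .
  have "B1 X (\<lambda>x. max (u x) 0 - max (- u x) 0)"
    by (intro B1_diff B1_borel_nn[OF hyp qn]) (use u' in auto)
  then show ?thesis by (rule B1_cong) auto
qed



theorem mainTheorem11:
  fixes X :: "'a topology"
  assumes "\<forall>U. openin X U \<longrightarrow>
     (\<exists>\<C>. countable \<C> \<and> (\<forall>C\<in>\<C>. openin X C \<and> closedin X C) \<and> \<Union>\<C> = U)"
  shows "(QN_bar_space X \<longleftrightarrow> QN_space X)
    \<and> (QN_space X \<longleftrightarrow>
        (\<forall>f. (\<forall>n. borel_fun X (f n)) \<longrightarrow> pointwise_converges X f (\<lambda>x. 0) \<longrightarrow> qn_converges X f (\<lambda>x. 0)))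
    \<and> (QN_space X \<longleftrightarrow>
        (\<forall>f g. (\<forall>n. borel_fun X (f n)) \<longrightarrow> pointwise_converges X f g \<longrightarrow> qn_converges X f g))"
proof -
  have hyp: "HYP X" using assms unfolding HYP_def .
  have Q1: "QN_bar_space X \<Longrightarrow> QN_space X" unfolding QN_bar_space_def QN_space_def by blast
  have Bor: "qn_converges X f g"
    if qn: "QN_space X" and fb: "\<forall>n. borel_fun X (f n)" and pw: "pointwise_converges X f g"
    for f :: "nat \<Rightarrow> 'a \<Rightarrow> real" and g
  proof -
    have "B1 X g \<and> qn_converges X f g"
    proof (rule B1_lim[OF hyp qn])
      show "B1 X (f n)" for n using B1_borel[OF hyp qn] fb by blast
      show "(\<lambda>n. f n x) \<longlonglongrightarrow> g x" if "x \<in> topspace X" for x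
        using pw that unfolding pointwise_converges_def by blast
    qed
    then show ?thesis by blast
  qed
  have back0: "QN_space X"
    if H: "\<forall>f. (\<forall>n. borel_fun X (f n)) \<longrightarrow> pointwise_converges X f (\<lambda>x. 0) \<longrightarrow> qn_converges X f (\<lambda>x. 0)"
    unfolding QN_space_def
  proof (intro allI impI)
    fix f :: "nat \<Rightarrow> 'a \<Rightarrow> real"
    assume "\<forall>n. continuous_map X euclideanreal (f n)" "pointwise_converges X f (\<lambda>x. 0)"
    then show "qn_converges X f (\<lambda>x. 0)" using H cont_borel by blast
  qed
  have back1: "QN_space X"
    if H: "\<forall>f g. (\<forall>n. borel_fun X (f n)) \<longrightarrow> pointwise_converges X f g \<longrightarrow> qn_converges X f g"
    using H by (intro back0) blast
  show ?thesis
    using Q1 qn_bar[OF hyp] Bor back0 back1 by blast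
qed


end
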